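(* Let $x_1,\dots,x_n\in\mathbb{R}^2$ satisfy $x_i\prec x_j$ whenever $i<j$, and let $p\ge2$. For $k\in\{2,\dots,p\}$ and $i\in\{k,\dots,n\}$, let $C^{MM}_{k,i}$ be the optimal value of the Max-Min $k$-dispersion problem among the points $x_1,\dots,x_i$, i.e. $C^{MM}_{k,i}=\max_{1\le i_1<\dots<i_k\le i}\min_{1\le a<b\le k}d_{i_a,i_b}$. Then $C^{MM}_{2,i}=d_{1,i}$ for all $i\in\{2,\dots,n\}$, and for all $k\in\{3,\dots,p\}$ and $i\in\{k,\dots,n\}$, $$C^{MM}_{k,i}=\max_{j\in\{k-1,\dots,i-1\}}\min\left(C^{MM}_{k-1,j},\,d_{j,i}\right).$$
   Context: For $y=(y^1,y^2),z=(z^1,z^2)\in\mathbb{R}^2$ write $y\prec z$ iff $y^1<z^1$ and $y^2>z^2$. Fix $\alpha>0$, let $d$ be the Euclidean distance, and set $d_{ij}=d(x_i,x_j)^\alpha$. *)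

theory Defs
  imports "HOL-Analysis.Analysis"
begin

definition prec :: "real^2 \<Rightarrow> real^2 \<Rightarrow> bool" where
  "prec y z \<longleftrightarrow> y$1 < z$1 \<and> y$2 > z$2"

definition dd :: "real \<Rightarrow> (nat \<Rightarrow> real^2) \<Rightarrow> nat \<Rightarrow> nat \<Rightarrow> real" where
  "dd \<alpha> x i j = dist (x i) (x j) powr \<alpha>"

definition CMM :: "real \<Rightarrow> (nat \<Rightarrow> real^2) \<Rightarrow> nat \<Rightarrow> nat \<Rightarrow> real" where
  "CMM \<alpha> x k i = Max ((\<lambda>S. Min {dd \<alpha> x a b | a b. a \<in> S \<and> b \<in> S \<and> a < b})
                       ` {S. S \<subseteq> {1..i} \<and> card S = k})"

end

theory Submission
  imports Defs
begin

lemma dist2: "dist (u::real^2) v = sqrt ((u$1-v$1)^2 + (u$2-v$2)^2)"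
  unfolding dist_norm norm_eq_sqrt_inner inner_vec_def sum_2 by (simp add: power2_eq_square)

lemma geo:
  assumes "prec a b" "prec b c"
  shows "dist a b \<le> dist a c" "dist b c \<le> dist a c"
proof -
  have h: "a$1 < b$1" "b$1 < c$1" "a$2 > b$2" "b$2 > c$2" using assms by (auto simp: prec_def)
  have p1: "(b$1-a$1)*(c$1-b$1) > 0" using h by simp
  have p2: "(a$2-b$2)*(b$2-c$2) > 0" using h by simp
  have e1: "(a$1-c$1)^2 = (a$1-b$1)^2 + (b$1-c$1)^2 + 2*((b$1-a$1)*(c$1-b$1))"
    by (simp add: power2_eq_square algebra_simps)
  have e2: "(a$2-c$2)^2 = (a$2-b$2)^2 + (b$2-c$2)^2 + 2*((a$2-b$2)*(b$2-c$2))"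
    by (simp add: power2_eq_square algebra_simps)
  have s1: "(a$1-b$1)^2 + (a$2-b$2)^2 \<le> (a$1-c$1)^2 + (a$2-c$2)^2"
    using e1 e2 p1 p2 by (smt (verit) zero_le_power2)
  have s2: "(b$1-c$1)^2 + (b$2-c$2)^2 \<le> (a$1-c$1)^2 + (a$2-c$2)^2"
    using e1 e2 p1 p2 by (smt (verit) zero_le_power2)
  show "dist a b \<le> dist a c" unfolding dist2 using s1 by simp
  show "dist b c \<le> dist a c" unfolding dist2 using s2 by simp
qed


definition prs :: "real \<Rightarrow> (nat \<Rightarrow> real^2) \<Rightarrow> nat set \<Rightarrow> real set" where
  "prs \<alpha> x S = {dd \<alpha> x a b | a b. a \<in> S \<and> b \<in> S \<and> a < b}"

lemma CMM_prs: "CMM \<alpha> x k i = Max ((\<lambda>S. Min (prs \<alpha> x S)) ` {S. S \<subseteq> {1..i} \<and> card S = k})"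
  unfolding CMM_def prs_def ..

lemma fin_prs: "finite S \<Longrightarrow> finite (prs \<alpha> x S)"
proof -
  assume "finite S"
  have "prs \<alpha> x S \<subseteq> (\<lambda>(a,b). dd \<alpha> x a b) ` (S \<times> S)" unfolding prs_def by auto
  then show ?thesis using \<open>finite S\<close> by (meson finite_SigmaI finite_imageI finite_subset)
qed

lemma ne_prs: assumes "card S \<ge> 2" shows "prs \<alpha> x S \<noteq> {}"
proof -
  have fin: "finite S" using assms card.infinite by fastforce
  have ne: "S \<noteq> {}" using assms by auto
  define a where "a = Min S"
  have aS: "a \<in> S" using fin ne a_def by simp
  have "card (S - {a}) \<ge> 1" using assms aS fin by (simp add: card_Diff_singleton)
  then obtain b where b: "b \<in> S - {a}" by (metis all_not_in_conv card.empty not_one_le_zero)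
  have "a \<le> b" using b fin a_def by simp
  then have "a < b" using b by auto
  then show ?thesis unfolding prs_def using aS b by blast
qed

lemma fam_fin: "finite {S. S \<subseteq> {1..i::nat} \<and> card S = k}"
  by (rule finite_subset[of _ "Pow {1..i}"]) auto

lemma fam_ne: "k \<le> i \<Longrightarrow> {S. S \<subseteq> {1..i::nat} \<and> card S = k} \<noteq> {}"
proof -
  assume "k \<le> i"
  then have "{1..k} \<in> {S. S \<subseteq> {1..i::nat} \<and> card S = k}" by auto
  then show ?thesis by blast
qed

lemma dd_mono:
  assumes H: "\<And>i j. 1 \<le> i \<Longrightarrow> i < j \<Longrightarrow> j \<le> n \<Longrightarrow> prec (x i) (x j)"
    and al: "\<alpha> > 0"
    and r: "1 \<le> a'" "a' \<le> a" "a < b" "b \<le> b'" "b' \<le> n"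
  shows "dd \<alpha> x a b \<le> dd \<alpha> x a' b'"
proof -
  have 1: "dist (x a) (x b) \<le> dist (x a') (x b)"
  proof (cases "a' = a")
    case False
    then show ?thesis using geo(2)[OF H H, of a' a b] r by auto
  qed simp
  have 2: "dist (x a') (x b) \<le> dist (x a') (x b')"
  proof (cases "b = b'")
    case False
    then show ?thesis using geo(1)[OF H H, of a' b b'] r by auto
  qed simp
  show ?thesis unfolding dd_def using 1 2 al by (intro powr_mono2) auto
qed

theorem proposition9:
  fixes x :: "nat \<Rightarrow> real^2" and n p :: nat and \<alpha> :: real
  assumes "\<alpha> > 0"
    and "\<And>i j. 1 \<le> i \<Longrightarrow> i < j \<Longrightarrow> j \<le> n \<Longrightarrow> prec (x i) (x j)"
    and "p \<ge> 2"
  shows "(\<forall>i\<in>{2..n}. CMM \<alpha> x 2 i = dd \<alpha> x 1 i) \<and>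
         (\<forall>k\<in>{3..p}. \<forall>i\<in>{k..n}.
            CMM \<alpha> x k i = Max {min (CMM \<alpha> x (k - 1) j) (dd \<alpha> x j i) | j. j \<in> {k - 1..i - 1}})"
proof
  have mono: "dd \<alpha> x a b \<le> dd \<alpha> x a' b'"
    if "1 \<le> a'" "a' \<le> a" "a < b" "b \<le> b'" "b' \<le> n" for a' a b b'
    using assms(2) assms(1) that by (rule dd_mono)
  show "\<forall>i\<in>{2..n}. CMM \<alpha> x 2 i = dd \<alpha> x 1 i"
  proof
    fix i assume i: "i \<in> {2..n}"
    show "CMM \<alpha> x 2 i = dd \<alpha> x 1 i"
      unfolding CMM_prs
    proof (rule Max_eqI)
      show "finite ((\<lambda>S. Min (prs \<alpha> x S)) ` {S. S \<subseteq> {1..i} \<and> card S = 2})"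
        using fam_fin by simp
      show "\<And>y. y \<in> (\<lambda>S. Min (prs \<alpha> x S)) ` {S. S \<subseteq> {1..i} \<and> card S = 2} \<Longrightarrow> y \<le> dd \<alpha> x 1 i"
      proof -
        fix y assume "y \<in> (\<lambda>S. Min (prs \<alpha> x S)) ` {S. S \<subseteq> {1..i} \<and> card S = 2}"
        then obtain S where S: "S \<subseteq> {1..i}" "card S = 2" and y: "y = Min (prs \<alpha> x S)" by auto
        have fS: "finite S" using S card.infinite by fastforce
        obtain v where v: "v \<in> prs \<alpha> x S" using ne_prs[of S \<alpha> x] S by auto
        then obtain a b where ab: "a \<in> S" "b \<in> S" "a < b" "v = dd \<alpha> x a b" unfolding prs_def by auto
        have "y \<le> v" using y v fin_prs[OF fS] by simp
        moreover have abi: "a \<in> {1..i}" "b \<in> {1..i}" using ab S by auto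
        moreover have "v \<le> dd \<alpha> x 1 i" unfolding ab(4) using abi ab(3) i by (intro mono) auto
        ultimately show "y \<le> dd \<alpha> x 1 i" by linarith
      qed
      have i1: "(1::nat) < i" using i by auto
      have pe: "prs \<alpha> x {1, i} = {dd \<alpha> x 1 i}"
      proof
        show "prs \<alpha> x {1, i} \<subseteq> {dd \<alpha> x 1 i}" unfolding prs_def using i1 by auto
        have "\<exists>a b. dd \<alpha> x 1 i = dd \<alpha> x a b \<and> a \<in> {1, i} \<and> b \<in> {1, i} \<and> a < b"
          using i1 by (intro exI[of _ 1] exI[of _ i]) simp
        then show "{dd \<alpha> x 1 i} \<subseteq> prs \<alpha> x {1, i}" unfolding prs_def by simp
      qed
      have fm: "{1, i} \<in> {S. S \<subseteq> {1..i} \<and> card S = 2}" using i1 by auto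
      have "dd \<alpha> x 1 i = Min (prs \<alpha> x {1, i})" unfolding pe by simp
      then show "dd \<alpha> x 1 i \<in> (\<lambda>S. Min (prs \<alpha> x S)) ` {S. S \<subseteq> {1..i} \<and> card S = 2}"
        using fm by (rule image_eqI)
    qed
  qed
  show "\<forall>k\<in>{3..p}. \<forall>i\<in>{k..n}.
            CMM \<alpha> x k i = Max {min (CMM \<alpha> x (k - 1) j) (dd \<alpha> x j i) | j. j \<in> {k - 1..i - 1}}"
  proof (intro ballI)
    fix k i assume k: "k \<in> {3..p}" and i: "i \<in> {k..n}"
    define R where "R = {min (CMM \<alpha> x (k - 1) j) (dd \<alpha> x j i) | j. j \<in> {k - 1..i - 1}}"
    have R_eq: "R = (\<lambda>j. min (CMM \<alpha> x (k - 1) j) (dd \<alpha> x j i)) ` {k - 1..i - 1}"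
      unfolding R_def by blast
    have finR: "finite R" unfolding R_eq by simp
    have neR: "R \<noteq> {}" unfolding R_eq using k i by auto
    have le1: "CMM \<alpha> x k i \<le> Max R"
      unfolding CMM_prs
    proof (subst Max_le_iff)
      show "finite ((\<lambda>S. Min (prs \<alpha> x S)) ` {S. S \<subseteq> {1..i} \<and> card S = k})"
        using fam_fin by simp
      show "(\<lambda>S. Min (prs \<alpha> x S)) ` {S. S \<subseteq> {1..i} \<and> card S = k} \<noteq> {}"
        using fam_ne[of k i] i by simp
      show "\<forall>a\<in>(\<lambda>S. Min (prs \<alpha> x S)) ` {S. S \<subseteq> {1..i} \<and> card S = k}. a \<le> Max R"
      proof
        fix y assume "y \<in> (\<lambda>S. Min (prs \<alpha> x S)) ` {S. S \<subseteq> {1..i} \<and> card S = k}"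
        then obtain S where S: "S \<subseteq> {1..i}" "card S = k" and y: "y = Min (prs \<alpha> x S)" by auto
        have fS: "finite S" using S k card.infinite by fastforce
        have neS: "S \<noteq> {}" using S k by auto
        define m where "m = Max S"
        have mS: "m \<in> S" using fS neS m_def by simp
        define T where "T = S - {m}"
        have cT: "card T = k - 1" using S mS fS unfolding T_def by (simp add: card_Diff_singleton)
        have fT: "finite T" using fS T_def by simp
        have neT: "T \<noteq> {}" using cT k fT by auto
        define j where "j = Max T"
        have jT: "j \<in> T" using fT neT j_def by simp
        have jm: "j < m" using jT fS m_def T_def
          by (metis DiffD1 DiffD2 Max_ge order_le_neq_trans singletonI)
        have mi: "m \<le> i" using mS S by auto
        have j1: "1 \<le> j" using jT S T_def by auto
        have Tj: "T \<subseteq> {1..j}"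
        proof
          fix t assume t: "t \<in> T"
          then have "t \<le> j" unfolding j_def using fT by simp
          moreover have "1 \<le> t" using t S unfolding T_def by auto
          ultimately show "t \<in> {1..j}" by simp
        qed
        have "k - 1 \<le> j" using card_mono[OF _ Tj] cT by simp
        then have jr: "j \<in> {k - 1..i - 1}" using jm mi by auto
        have TS: "prs \<alpha> x T \<subseteq> prs \<alpha> x S" unfolding prs_def T_def by auto
        have neP: "prs \<alpha> x T \<noteq> {}" using ne_prs[of T] cT k by auto
        have "y \<le> Min (prs \<alpha> x T)" using y TS neP fin_prs[OF fS] by (simp add: Min_antimono)
        also have "Min (prs \<alpha> x T) \<le> CMM \<alpha> x (k - 1) j"
          unfolding CMM_prs using Tj cT fam_fin by (intro Max_ge) auto
        finally have y1: "y \<le> CMM \<alpha> x (k - 1) j" .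
        have "dd \<alpha> x j m \<in> prs \<alpha> x S" unfolding prs_def using jT T_def mS jm by auto
        then have "y \<le> dd \<alpha> x j m" using y fin_prs[OF fS] by simp
        also have "dd \<alpha> x j m \<le> dd \<alpha> x j i" using mono[of j j m i] j1 jm mi i by auto
        finally have "y \<le> min (CMM \<alpha> x (k - 1) j) (dd \<alpha> x j i)" using y1 by simp
        also have "\<dots> \<le> Max R" using finR jr unfolding R_eq by (intro Max_ge) auto
        finally show "y \<le> Max R" .
      qed
    qed
    have le2: "Max R \<le> CMM \<alpha> x k i"
    proof (subst Max_le_iff[OF finR neR], intro ballI)
      fix r assume "r \<in> R"
      then obtain j where jr: "j \<in> {k - 1..i - 1}" and r: "r = min (CMM \<alpha> x (k - 1) j) (dd \<alpha> x j i)"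
        unfolding R_eq by auto
      have "CMM \<alpha> x (k - 1) j \<in> (\<lambda>S. Min (prs \<alpha> x S)) ` {S. S \<subseteq> {1..j} \<and> card S = k - 1}"
        unfolding CMM_prs using fam_fin fam_ne[of "k - 1" j] jr by (intro Max_in) auto
      then obtain T where T: "T \<subseteq> {1..j}" "card T = k - 1" and cm: "CMM \<alpha> x (k - 1) j = Min (prs \<alpha> x T)"
        by auto
      have fT: "finite T" using T(1) finite_subset by blast
      have ji: "j < i" using jr k i by auto
      have iT: "i \<notin> T" using T ji by auto
      define S where "S = insert i T"
      have fS: "finite S" using fT S_def by simp
      have cS: "card S = k" using T fT iT k unfolding S_def by simp
      have Si: "S \<subseteq> {1..i}" using T ji k i unfolding S_def by auto
      have neP: "prs \<alpha> x S \<noteq> {}" using ne_prs[of S] cS k by auto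
      have "r \<le> Min (prs \<alpha> x S)"
      proof (subst Min_ge_iff[OF fin_prs[OF fS] neP], intro ballI)
        fix v assume "v \<in> prs \<alpha> x S"
        then obtain a b where ab: "a \<in> S" "b \<in> S" "a < b" "v = dd \<alpha> x a b" unfolding prs_def by auto
        show "r \<le> v"
        proof (cases "b = i")
          case True
          then have aT: "a \<in> T" using ab S_def by auto
          then have "1 \<le> a" "a \<le> j" using T by auto
          then have "dd \<alpha> x j i \<le> v" using ab True ji i mono[of a j i i] by auto
          then show ?thesis using r by simp
        next
          case False
          then have bT: "b \<in> T" using ab S_def by auto
          then have "b \<le> j" using T by auto
          then have aT: "a \<in> T" using ab S_def ji by auto
          have "v \<in> prs \<alpha> x T" unfolding prs_def using aT bT ab by auto
          then have "Min (prs \<alpha> x T) \<le> v" using fin_prs[OF fT] by simp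
          then show ?thesis using r cm by simp
        qed
      qed
      also have "Min (prs \<alpha> x S) \<le> CMM \<alpha> x k i"
        unfolding CMM_prs using Si cS fam_fin by (intro Max_ge) auto
      finally show "r \<le> CMM \<alpha> x k i" .
    qed
    show "CMM \<alpha> x k i = Max {min (CMM \<alpha> x (k - 1) j) (dd \<alpha> x j i) | j. j \<in> {k - 1..i - 1}}"
      using antisym[OF le1 le2] unfolding R_def .
  qed
qed

end
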